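(* Let $Y$ be a first-countable topological space such that $\mathrm{H}_1([0,1],Y)\subseteq \mathrm{B}_1([0,1],Y)$. Then $Y$ is locally almost arcwise connected.
   Context: $\mathrm{H}_1(X,Y)$: mappings $f:X\to Y$ with $f^{-1}(V)$ an $F_\sigma$-set for every open $V\subseteq Y$. $\mathrm{B}_1(X,Y)$: pointwise limits of sequences of continuous mappings $X\to Y$. Two sets $A,B$ are joined by an arc in a set $S$ if there is a continuous $\gamma:[0,1]\to Y$ with $\gamma([0,1])\subseteq S$, $\gamma(0)\in A$, $\gamma(1)\in B$. $Y$ is locally almost arcwise connected at $y$ if for every neighborhood $V$ of $y$ there is a neighborhood $U\subseteq V$ of $y$ such that each pair of nonempty open subsets of $U$ can be joined by an arc in $\overline V$; $Y$ is locally almost arcwise connected if this holds at every point. *)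

theory Defs
  imports "HOL-Analysis.Analysis"
begin

definition fsigma_in_unit :: "real set \<Rightarrow> bool" where
  "fsigma_in_unit S \<longleftrightarrow>
     (\<exists>C :: nat \<Rightarrow> real set. (\<forall>n. closedin (top_of_set {0..1}) (C n)) \<and> S = (\<Union>n. C n))"

definition H1_unit :: "(real \<Rightarrow> 'a::topological_space) \<Rightarrow> bool" where
  "H1_unit f \<longleftrightarrow> (\<forall>V. open V \<longrightarrow> fsigma_in_unit ({0..1} \<inter> f -` V))"

definition B1_unit :: "(real \<Rightarrow> 'a::topological_space) \<Rightarrow> bool" where
  "B1_unit f \<longleftrightarrow> (\<exists>g :: nat \<Rightarrow> real \<Rightarrow> 'a.
      (\<forall>n. continuous_on {0..1} (g n)) \<and>
      (\<forall>x\<in>{0..1}. (\<lambda>n. g n x) \<longlonglongrightarrow> f x))"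

definition is_nhd :: "'a::topological_space set \<Rightarrow> 'a \<Rightarrow> bool" where
  "is_nhd V y \<longleftrightarrow> (\<exists>W. open W \<and> y \<in> W \<and> W \<subseteq> V)"

definition joined_by_arc_in :: "'a::topological_space set \<Rightarrow> 'a set \<Rightarrow> 'a set \<Rightarrow> bool" where
  "joined_by_arc_in A B S \<longleftrightarrow>
     (\<exists>\<gamma> :: real \<Rightarrow> 'a. continuous_on {0..1} \<gamma> \<and> \<gamma> ` {0..1} \<subseteq> S \<and> \<gamma> 0 \<in> A \<and> \<gamma> 1 \<in> B)"

definition loc_almost_arcwise_connected_at :: "'a::topological_space \<Rightarrow> bool" where
  "loc_almost_arcwise_connected_at y \<longleftrightarrow>
     (\<forall>V. is_nhd V y \<longrightarrow>
        (\<exists>U. U \<subseteq> V \<and> is_nhd U y \<and>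
           (\<forall>A B. open A \<and> A \<subseteq> U \<and> A \<noteq> {} \<and> open B \<and> B \<subseteq> U \<and> B \<noteq> {} \<longrightarrow>
                  joined_by_arc_in A B (closure V))))"

definition loc_almost_arcwise_connected :: "'a::topological_space itself \<Rightarrow> bool" where
  "loc_almost_arcwise_connected _ \<longleftrightarrow> (\<forall>y::'a. loc_almost_arcwise_connected_at y)"

end

theory Submission
  imports Defs
begin

definition Sa :: "nat \<Rightarrow> real \<Rightarrow> bool" where
  "Sa n x \<longleftrightarrow> (\<exists>j::int. x * 2^n = of_int (4*j+1))"
definition Sb :: "nat \<Rightarrow> real \<Rightarrow> bool" where
  "Sb n x \<longleftrightarrow> (\<exists>j::int. x * 2^n = of_int (4*j+3))"

lemma odd_level: "Sa n x \<or> Sb n x \<Longrightarrow> \<exists>i::int. x * 2^n = of_int (2*i+1)"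
  unfolding Sa_def Sb_def
  apply (elim disjE exE)
  subgoal for j by (rule exI[of _ "2*j"]) simp
  subgoal for j by (rule exI[of _ "2*j+1"]) simp
  done

lemma level_unique_aux:
  fixes x :: real
  assumes "x * 2^n = of_int (2*i+1)" "x * 2^m = of_int (2*k+1)" "n < m"
  shows False
proof -
  have e: "m = n + (m-n)" using assms(3) by simp
  have p: "(2::real)^m = 2^n*2^(m-n)" by (metis e power_add)
  have "x * 2^m = (x * 2^n) * 2^(m-n)" unfolding p by (simp only: mult.assoc)
  hence "(of_int (2*k+1)::real) = of_int (2*i+1) * of_int (2^(m-n))" using assms(1,2) by simp
  hence "(2*k+1) = (2*i+1) * (2::int)^(m-n)"
    by (simp only: of_int_mult[symmetric] of_int_eq_iff)
  moreover have "even ((2*i+1) * (2::int)^(m-n))" using assms(3) by (simp add: even_power)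
  ultimately have "even (2*k+1::int)" by metis
  thus False by simp
qed

lemma level_unique:
  assumes "Sa n x \<or> Sb n x" "Sa m x \<or> Sb m x" shows "n = m"
proof -
  obtain i where i: "x * 2^n = of_int (2*i+1)" using odd_level[OF assms(1)] by blast
  obtain k where k: "x * 2^m = of_int (2*k+1)" using odd_level[OF assms(2)] by blast
  show ?thesis
  proof (rule ccontr)
    assume "n \<noteq> m"
    then consider "n < m" | "m < n" by linarith
    then show False
      by cases (use level_unique_aux[OF i k] level_unique_aux[OF k i] in auto)
  qed
qed

lemma Sa_not_Sb: "Sa n x \<Longrightarrow> Sb n x \<Longrightarrow> False"
proof -
  assume "Sa n x" "Sb n x"
  then obtain j i where "x * 2^n = of_int (4*j+1)" "x * 2^n = of_int (4*i+3)"
    unfolding Sa_def Sb_def by blast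
  hence "(4*j+1) = (4*i+3::int)" by (metis of_int_eq_iff)
  thus False by presburger
qed

lemma countable_Sa: "countable {x. \<exists>n. Sa n x}"
proof -
  have "{x. \<exists>n. Sa n x} \<subseteq> (\<lambda>(n,j). of_int (4*j+1) / 2^n) ` (UNIV :: (nat \<times> int) set)"
  proof
    fix x assume "x \<in> {x. \<exists>n. Sa n x}"
    then obtain n j where "x * 2^n = of_int (4*j+1)" unfolding Sa_def by blast
    hence "x = (\<lambda>(n,j). of_int (4*j+1) / 2^n) (n,j)" by (simp add: field_simps)
    thus "x \<in> (\<lambda>(n,j). of_int (4*j+1) / 2^n) ` (UNIV :: (nat \<times> int) set)" by blast
  qed
  thus ?thesis by (rule countable_subset) simp
qed

lemma countable_Sb: "countable {x. \<exists>n. Sb n x}"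
proof -
  have "{x. \<exists>n. Sb n x} \<subseteq> (\<lambda>(n,j). of_int (4*j+3) / 2^n) ` (UNIV :: (nat \<times> int) set)"
  proof
    fix x assume "x \<in> {x. \<exists>n. Sb n x}"
    then obtain n j where "x * 2^n = of_int (4*j+3)" unfolding Sb_def by blast
    hence "x = (\<lambda>(n,j). of_int (4*j+3) / 2^n) (n,j)" by (simp add: field_simps)
    thus "x \<in> (\<lambda>(n,j). of_int (4*j+3) / 2^n) ` (UNIV :: (nat \<times> int) set)" by blast
  qed
  thus ?thesis by (rule countable_subset) simp
qed

lemma finite_level: "finite {x\<in>{0..1}. Sa n x \<or> Sb n x}"
proof -
  have "{x\<in>{0..1}. Sa n x \<or> Sb n x} \<subseteq> (\<lambda>j. of_int j / 2^n) ` {-4..2^n}"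
  proof
    fix x assume x: "x \<in> {x\<in>{0..1}. Sa n x \<or> Sb n x}"
    then obtain i where i: "x * 2^n = of_int (2*i+1)" using odd_level by blast
    have "0 \<le> x * 2^n" "x * 2^n \<le> 2^n" using x by (auto simp: mult_le_cancel_right1)
    hence "0 \<le> (of_int (2*i+1)::real)" "(of_int (2*i+1)::real) \<le> of_int (2^n)" using i by auto
    hence "0 \<le> 2*i+1" "2*i+1 \<le> (2::int)^n" by linarith+
    hence "2*i+1 \<in> {-4..2^n}" by simp
    moreover have "x = of_int (2*i+1) / 2^n" using i by (simp add: field_simps)
    ultimately show "x \<in> (\<lambda>j. of_int j / 2^n) ` {-4..2^n}" by blast
  qed
  thus ?thesis by (rule finite_subset) simp
qed

lemma fsigma_unit_of_fsigma_in:
  assumes "fsigma_in (top_of_set {0..1}) S" shows "fsigma_in_unit S"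
proof -
  obtain U where U: "countable U" "\<forall>c\<in>U. closedin (top_of_set {0..1}) c" "\<Union>U = S"
    using assms unfolding fsigma_in_def union_of_def by auto
  show ?thesis
  proof (cases "U = {}")
    case True then show ?thesis unfolding fsigma_in_unit_def using U
      by (intro exI[of _ "\<lambda>n. {}"] conjI allI) simp_all
  next
    case False
    show ?thesis unfolding fsigma_in_unit_def
    proof (intro exI conjI allI)
      fix n show "closedin (top_of_set {0..1}) (from_nat_into U n)"
        using bspec[OF U(2) from_nat_into[OF False]] .
      show "S = (\<Union>n. from_nat_into U n)"
        using U(3) range_from_nat_into[OF False U(1)] by simp
    qed
  qed
qed

lemma countable_fsigma_unit_ne:
  assumes "countable S" "S \<subseteq> {0..1}" "S \<noteq> {}" shows "fsigma_in_unit S"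
proof -
  have "\<forall>n. closedin (top_of_set {0..1}) {from_nat_into S n}"
  proof
    fix n
    have "from_nat_into S n \<in> {0..1}" by (rule subsetD[OF assms(2) from_nat_into[OF assms(3)]])
    thus "closedin (top_of_set {0..1}) {from_nat_into S n}"
      by (intro closed_subset) auto
  qed
  moreover have "S = (\<Union>n. {from_nat_into S n})"
  proof -
    have "range (from_nat_into S) = S" by (rule range_from_nat_into[OF assms(3,1)])
    thus ?thesis by auto
  qed
  ultimately show ?thesis unfolding fsigma_in_unit_def
    by (intro exI[of _ "\<lambda>n. {from_nat_into S n}"]) simp
qed
lemma countable_fsigma_unit:
  assumes "countable S" "S \<subseteq> {0..1}" shows "fsigma_in_unit S"
proof (cases "S = {}")
  case True
  show ?thesis unfolding fsigma_in_unit_def True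
    by (intro exI[of _ "\<lambda>n. {}"] conjI allI) simp_all
next
  case False
  show ?thesis by (rule countable_fsigma_unit_ne[OF assms False])
qed

lemma openin_fsigma_unit:
  assumes "openin (top_of_set {0..1}) S" shows "fsigma_in_unit S"
  by (rule fsigma_unit_of_fsigma_in, rule open_imp_fsigma_in[OF _ assms])
     (simp add: metrizable_space_subtopology metrizable_space_euclidean)

theorem mainTheorem10:
  assumes "\<forall>f :: real \<Rightarrow> 'a::first_countable_topology. H1_unit f \<longrightarrow> B1_unit f"
  shows "loc_almost_arcwise_connected TYPE('a)"
proof (rule ccontr)
  assume "\<not> ?thesis"
  then obtain y :: 'a where "\<not> loc_almost_arcwise_connected_at y"
    unfolding loc_almost_arcwise_connected_def by blast
  then obtain V where nV: "is_nhd V y" and H0: "\<not> (\<exists>U. U \<subseteq> V \<and> is_nhd U y \<and>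
           (\<forall>A B. open A \<and> A \<subseteq> U \<and> A \<noteq> {} \<and> open B \<and> B \<subseteq> U \<and> B \<noteq> {} \<longrightarrow>
                  joined_by_arc_in A B (closure V)))"
    unfolding loc_almost_arcwise_connected_at_def by blast
  have H: "\<exists>A B. open A \<and> A \<subseteq> U \<and> A \<noteq> {} \<and> open B \<and> B \<subseteq> U \<and> B \<noteq> {} \<and> \<not> joined_by_arc_in A B (closure V)"
    if "U \<subseteq> V" "is_nhd U y" for U
  proof -
    have "\<not> (\<forall>A B. open A \<and> A \<subseteq> U \<and> A \<noteq> {} \<and> open B \<and> B \<subseteq> U \<and> B \<noteq> {} \<longrightarrow>
                  joined_by_arc_in A B (closure V))" using H0 that by blast
    thus ?thesis by (simp only: not_all not_imp conj_assoc)
  qed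
  obtain W0 where W0: "open W0" "y \<in> W0" "W0 \<subseteq> V" using nV unfolding is_nhd_def by blast
  obtain Ab :: "nat \<Rightarrow> 'a set" where Ab: "\<And>i. open (Ab i)" "\<And>i. y \<in> Ab i"
    "\<And>S. open S \<Longrightarrow> y \<in> S \<Longrightarrow> eventually (\<lambda>i. Ab i \<subseteq> S) sequentially"
    using countable_basis_at_decseq[of y] by blast
  have "\<forall>i. \<exists>A B. open A \<and> A \<subseteq> Ab i \<inter> W0 \<and> A \<noteq> {} \<and> open B \<and> B \<subseteq> Ab i \<inter> W0 \<and> B \<noteq> {} \<and> \<not> joined_by_arc_in A B (closure V)"
  proof
    fix i
    have "is_nhd (Ab i \<inter> W0) y" unfolding is_nhd_def using Ab W0 by blast
    moreover have "Ab i \<inter> W0 \<subseteq> V" using W0 by blast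
    ultimately show "\<exists>A B. open A \<and> A \<subseteq> Ab i \<inter> W0 \<and> A \<noteq> {} \<and> open B \<and> B \<subseteq> Ab i \<inter> W0 \<and> B \<noteq> {} \<and> \<not> joined_by_arc_in A B (closure V)"
      by (rule H[rotated])
  qed
  then have "\<exists>AA. \<forall>i. \<exists>B. open (AA i) \<and> AA i \<subseteq> Ab i \<inter> W0 \<and> AA i \<noteq> {} \<and> open B \<and> B \<subseteq> Ab i \<inter> W0 \<and> B \<noteq> {} \<and> \<not> joined_by_arc_in (AA i) B (closure V)"
    by (rule choice)
  then obtain AA where "\<forall>i. \<exists>B. open (AA i) \<and> AA i \<subseteq> Ab i \<inter> W0 \<and> AA i \<noteq> {} \<and> open B \<and> B \<subseteq> Ab i \<inter> W0 \<and> B \<noteq> {} \<and> \<not> joined_by_arc_in (AA i) B (closure V)"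
    by (rule exE)
  then have "\<exists>BB. \<forall>i. open (AA i) \<and> AA i \<subseteq> Ab i \<inter> W0 \<and> AA i \<noteq> {} \<and> open (BB i) \<and> BB i \<subseteq> Ab i \<inter> W0 \<and> BB i \<noteq> {} \<and> \<not> joined_by_arc_in (AA i) (BB i) (closure V)"
    by (rule choice)
  then obtain BB where AB': "\<forall>i. open (AA i) \<and> AA i \<subseteq> Ab i \<inter> W0 \<and> AA i \<noteq> {} \<and> open (BB i) \<and> BB i \<subseteq> Ab i \<inter> W0 \<and> BB i \<noteq> {} \<and> \<not> joined_by_arc_in (AA i) (BB i) (closure V)"
    by (rule exE)
  have AB: "open (AA i) \<and> AA i \<subseteq> Ab i \<inter> W0 \<and> AA i \<noteq> {} \<and> open (BB i) \<and> BB i \<subseteq> Ab i \<inter> W0 \<and> BB i \<noteq> {} \<and> \<not> joined_by_arc_in (AA i) (BB i) (closure V)" for i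
    using AB' by (rule spec)
  have AAo: "open (AA i)" and AAs: "AA i \<subseteq> Ab i \<inter> W0" and AAn: "AA i \<noteq> {}"
    and BBo: "open (BB i)" and BBs: "BB i \<subseteq> Ab i \<inter> W0" and BBn: "BB i \<noteq> {}"
    and nj: "\<not> joined_by_arc_in (AA i) (BB i) (closure V)" for i
    using AB[of i] by simp_all
  define a where "a i = (SOME z. z \<in> AA i)" for i
  define b where "b i = (SOME z. z \<in> BB i)" for i
  have a: "a i \<in> AA i" for i using AB[of i] unfolding a_def by (meson ex_in_conv someI_ex)
  have b: "b i \<in> BB i" for i using AB[of i] unfolding b_def by (meson ex_in_conv someI_ex)
  define f :: "real \<Rightarrow> 'a" where "f x = (if \<exists>n. Sa n x then a (SOME n. Sa n x)
      else if \<exists>n. Sb n x then b (SOME n. Sb n x) else y)" for x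
  have fa: "f x = a n" if "Sa n x" for n x
  proof -
    have "(SOME n. Sa n x) = n"
      by (rule some_equality) (use that level_unique in blast)+
    thus ?thesis unfolding f_def using that by auto
  qed
  have fb: "f x = b n" if "Sb n x" for n x
  proof -
    have "\<not> (\<exists>n. Sa n x)" using that level_unique Sa_not_Sb by blast
    moreover have "(SOME n. Sb n x) = n"
      by (rule some_equality) (use that level_unique in blast)+
    ultimately show ?thesis unfolding f_def using that by auto
  qed
  have fy: "f x = y" if "\<not> (\<exists>n. Sa n x)" "\<not> (\<exists>n. Sb n x)" for x
    unfolding f_def using that by auto
  have H1: "H1_unit f"
    unfolding H1_unit_def
  proof (intro allI impI)
    fix Q :: "'a set" assume Q: "open Q"
    show "fsigma_in_unit ({0..1} \<inter> f -` Q)"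
    proof (cases "y \<in> Q")
      case False
      have "{0..1} \<inter> f -` Q \<subseteq> {x. \<exists>n. Sa n x} \<union> {x. \<exists>n. Sb n x}" using fy False by auto
      hence "countable ({0..1} \<inter> f -` Q)"
        using countable_Sa countable_Sb countable_subset countable_Un by metis
      then show ?thesis by (rule countable_fsigma_unit) auto
    next
      case True
      then have "eventually (\<lambda>i. Ab i \<subseteq> Q) sequentially" using Ab(3) Q by blast
      then obtain N where N: "\<And>i. i \<ge> N \<Longrightarrow> Ab i \<subseteq> Q" unfolding eventually_sequentially by blast
      define E where "E = (\<Union>n<N. {x\<in>{0..1}. Sa n x \<or> Sb n x})"
      have fin: "finite E" unfolding E_def using finite_level by auto
      have sub: "x \<in> E" if "x \<in> {0..1}" "f x \<notin> Q" for x
      proof -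
        have "\<exists>n. Sa n x \<or> Sb n x"
        proof (rule ccontr)
          assume "\<not> (\<exists>n. Sa n x \<or> Sb n x)"
          hence "f x = y" by (intro fy) auto
          thus False using that(2) True by simp
        qed
        then obtain n where n: "Sa n x \<or> Sb n x" by blast
        have "f x \<in> Ab n"
        proof (cases "Sa n x")
          case True
          have "f x \<in> AA n" unfolding fa[OF True] by (rule a)
          then show ?thesis using AAs[of n] by blast
        next
          case False
          then have "Sb n x" using n by (simp only: simp_thms)
          have "f x \<in> BB n" unfolding fb[OF \<open>Sb n x\<close>] by (rule b)
          then show ?thesis using BBs[of n] by blast
        qed
        have "n < N"
        proof (rule ccontr)
          assume "\<not> n < N"
          hence "Ab n \<subseteq> Q" using N by simp
          thus False using \<open>f x \<in> Ab n\<close> that(2) by blast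
        qed
        thus ?thesis unfolding E_def using n that(1) by auto
      qed
      have eq: "{0..1} \<inter> f -` Q = {0..1} - (E - f -` Q)" using sub by blast
      have "closedin (top_of_set {0..1}) (E - f -` Q)"
        by (rule closed_subset) (auto simp: E_def intro!: finite_imp_closed finite_subset[OF _ fin])
      hence "openin (top_of_set {0..1}) ({0..1} - (E - f -` Q))"
        by (intro openin_diff) auto
      thus ?thesis unfolding eq by (rule openin_fsigma_unit)
    qed
  qed
  then obtain g where g: "\<And>n. continuous_on {0..1} (g n)"
    "\<And>x. x \<in> {0..1} \<Longrightarrow> (\<lambda>n. g n x) \<longlonglongrightarrow> f x"
    using assms unfolding B1_unit_def by blast
  define F where "F m = (\<Inter>k\<in>{m..}. {0..1} \<inter> g k -` closure V)" for m
  have Fsub: "F m \<subseteq> {0..1}" for m unfolding F_def by auto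
  have Fc: "closedin (top_of_set {0..1}) (F m)" for m
  proof (rule closed_subset[OF Fsub])
    show "closed (F m)" unfolding F_def
      by (intro closed_INT ballI continuous_closed_preimage[OF g(1)]) auto
  qed
  have fW: "f x \<in> W0" for x
  proof (cases "\<exists>n. Sa n x")
    case True then obtain n where "Sa n x" by blast
    have "f x \<in> AA n" unfolding fa[OF \<open>Sa n x\<close>] by (rule a)
    then show ?thesis using AAs[of n] by blast
  next
    case F1: False
    show ?thesis
    proof (cases "\<exists>n. Sb n x")
      case True then obtain n where "Sb n x" by blast
      have "f x \<in> BB n" unfolding fb[OF \<open>Sb n x\<close>] by (rule b)
      then show ?thesis using BBs[of n] by blast
    next
      case False then show ?thesis using fy F1 W0 by simp
    qed
  qed
  have cover: "\<Union>(range F) = {0..1}"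
  proof
    show "\<Union>(range F) \<subseteq> {0..1}" using Fsub by blast
    show "{0..1} \<subseteq> \<Union>(range F)"
    proof
      fix x :: real assume x: "x \<in> {0..1}"
      have "eventually (\<lambda>k. g k x \<in> W0) sequentially"
        using topological_tendstoD[OF g(2)[OF x] W0(1) fW] .
      then obtain m where "\<And>k. k \<ge> m \<Longrightarrow> g k x \<in> W0" unfolding eventually_sequentially by blast
      hence "x \<in> F m" unfolding F_def using x W0(3) closure_subset by fastforce
      thus "x \<in> \<Union>(range F)" by blast
    qed
  qed
  have cm: "completely_metrizable_space (top_of_set {0..1::real})"
    using completely_metrizable_space_cbox[of 0 "1::real"] by simp
  have ne: "top_of_set {0..1::real} interior_of \<Union>(range F) \<noteq> {}"
    unfolding cover using interior_of_topspace[of "top_of_set {0..1::real}"] by simp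
  have "\<exists>m. top_of_set {0..1::real} interior_of F m \<noteq> {}"
  proof (rule ccontr)
    assume "\<not> (\<exists>m. top_of_set {0..1::real} interior_of F m \<noteq> {})"
    hence all: "\<And>m. top_of_set {0..1::real} interior_of F m = {}" by blast
    have "top_of_set {0..1::real} interior_of \<Union>(range F) = {}"
    proof (rule Baire_category_alt)
      show "completely_metrizable_space (top_of_set {0..1::real}) \<or>
        locally_compact_space (top_of_set {0..1::real}) \<and> regular_space (top_of_set {0..1::real})"
        using cm by blast
      show "countable (range F)" by simp
      fix T assume "T \<in> range F"
      then obtain m where "T = F m" by blast
      thus "closedin (top_of_set {0..1}) T \<and> top_of_set {0..1} interior_of T = {}"
        using Fc all by simp
    qed
    with ne show False by blast
  qed
  then obtain m where "top_of_set {0..1::real} interior_of F m \<noteq> {}" by blast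
  then obtain x Q where xO: "openin (top_of_set {0..1}) Q" "x \<in> Q" "Q \<subseteq> F m"
    unfolding interior_of_def by blast
  then obtain e where e: "e > 0" "\<And>x'. x' \<in> {0..1} \<Longrightarrow> dist x' x < e \<Longrightarrow> x' \<in> Q"
    unfolding openin_euclidean_subtopology_iff by blast
  have x01: "x \<in> {0..1}" using xO Fsub by blast
  obtain c d where cd: "c < d" "0 \<le> c" "d \<le> 1" "{c..d} \<subseteq> F m"
  proof -
    define e' where "e' = min (e/2) (1/2)"
    have e': "0 < e'" "e' < e" "e' \<le> 1/2" using e(1) unfolding e'_def by auto
    show ?thesis
    proof (cases "x \<le> 1/2")
      case True
      have "{x..x+e'} \<subseteq> F m"
      proof
        fix z assume "z \<in> {x..x+e'}"
        hence "z \<in> {0..1}" "dist z x < e" using x01 e' True by (auto simp: dist_real_def)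
        thus "z \<in> F m" using e(2) xO(3) by blast
      qed
      thus ?thesis using that[of x "x+e'"] e' x01 True by auto
    next
      case False
      have "{x-e'..x} \<subseteq> F m"
      proof
        fix z assume "z \<in> {x-e'..x}"
        hence "z \<in> {0..1}" "dist z x < e" using x01 e' False by (auto simp: dist_real_def)
        thus "z \<in> F m" using e(2) xO(3) by blast
      qed
      thus ?thesis using that[of "x-e'" x] e' x01 False by auto
    qed
  qed
  obtain n where n: "8/(d-c) < (2::real)^n" using real_arch_pow[of 2 "8/(d-c)"] by auto
  define P where "P = (2::real)^n"
  have P: "P > 0" "8 < P*(d-c)" using n cd(1) unfolding P_def by (auto simp: field_simps)
  define j where "j = ceiling ((c*P - 1)/4)"
  have j1: "(c*P - 1)/4 \<le> of_int j" "of_int j < (c*P - 1)/4 + 1" unfolding j_def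
    using ceiling_correct[of "(c*P - 1)/4"] by linarith+
  define s where "s = of_int (4*j+1) / P"
  define t where "t = of_int (4*j+3) / P"
  have Sas: "Sa n s" unfolding Sa_def s_def using P by (auto simp: P_def)
  have Sbt: "Sb n t" unfolding Sb_def t_def using P by (auto simp: P_def)
  have cs: "c \<le> s" unfolding s_def using j1 P by (simp add: field_simps)
  have td: "t \<le> d" unfolding t_def using j1 P by (simp add: field_simps)
  have st: "s \<le> t" unfolding s_def t_def using P by (simp add: divide_right_mono)
  have s01: "s \<in> {0..1}" "t \<in> {0..1}" using cs st td cd by auto
  have ev1: "eventually (\<lambda>k. g k s \<in> AA n) sequentially"
    using topological_tendstoD[OF g(2)[OF s01(1)], of "AA n"] AB[of n] a[of n] fa[OF Sas] by auto
  have ev2: "eventually (\<lambda>k. g k t \<in> BB n) sequentially"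
    using topological_tendstoD[OF g(2)[OF s01(2)], of "BB n"] AB[of n] b[of n] fb[OF Sbt] by auto
  have "eventually (\<lambda>k. g k s \<in> AA n \<and> g k t \<in> BB n \<and> k \<ge> m) sequentially"
    by (intro eventually_conj ev1 ev2 eventually_ge_at_top)
  then obtain M where M: "\<And>k. k \<ge> M \<Longrightarrow> g k s \<in> AA n \<and> g k t \<in> BB n \<and> k \<ge> m"
    unfolding eventually_sequentially by blast
  obtain k where k: "g k s \<in> AA n" "g k t \<in> BB n" "k \<ge> m" using M[of M] by blast
  define \<gamma> where "\<gamma> u = g k (s + u*(t-s))" for u
  have lin: "s + u*(t-s) \<in> {s..t}" if "u \<in> {0..1}" for u
  proof -
    have "(t-s)*u \<le> t-s" using that st by (intro mult_right_le_one_le) auto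
    moreover have "0 \<le> u*(t-s)" using that st by auto
    ultimately show ?thesis by (auto simp: mult.commute)
  qed
  have stF: "{s..t} \<subseteq> F m" using cs td cd(4) by auto
  have "joined_by_arc_in (AA n) (BB n) (closure V)"
    unfolding joined_by_arc_in_def
  proof (intro exI conjI)
    have img: "(\<lambda>u. s + u*(t-s)) ` {0..1} \<subseteq> {0..1}"
    proof
      fix z assume "z \<in> (\<lambda>u. s + u*(t-s)) ` {0..1}"
      then obtain u where u: "u \<in> {0..1}" "z = s + u*(t-s)" by blast
      have "z \<in> {s..t}" using lin[OF u(1)] u(2) by simp
      thus "z \<in> {0..1}" using s01 by simp
    qed
    have contlin: "continuous_on {0..1} (\<lambda>u. s + u*(t-s))" by (intro continuous_intros)
    show "continuous_on {0..1} \<gamma>" unfolding \<gamma>_def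
      by (rule continuous_on_compose2[OF g(1)[of k] contlin img])
    show "\<gamma> ` {0..1} \<subseteq> closure V"
    proof
      fix z assume "z \<in> \<gamma> ` {0..1}"
      then obtain u where u: "u \<in> {0..1}" "z = \<gamma> u" by blast
      have "s + u*(t-s) \<in> F m" using lin[OF u(1)] stF by blast
      thus "z \<in> closure V" using u k(3) unfolding \<gamma>_def F_def by auto
    qed
    show "\<gamma> 0 \<in> AA n" using k unfolding \<gamma>_def by simp
    show "\<gamma> 1 \<in> BB n" using k unfolding \<gamma>_def by simp
  qed
  thus False using AB[of n] by blast
qed

end
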